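(* Let $f:\mathbb{R}\to(0,+\infty)$ be Lipschitz continuous and continuously differentiable with $f>0$, $f'\le 0$ and $\lim_{x\to+\infty}f(x)=0$. Let $r>0$, $\tau_0\ge 0$, and let $A:(-\infty,r)\to\mathbb{R}$ be continuous with $A(t)=\varphi(t)$ for $t\le 0$, where $\varphi:(-\infty,0]\to\mathbb{R}$ is continuous. Then there exists a unique function $\tau:[0,r)\to[0,+\infty)$ satisfying $$\int_{t-\tau(t)}^{t}f(A(\sigma))\,d\sigma=\int_{-\tau_0}^{0}f(\varphi(\sigma))\,d\sigma\quad\text{for all }t\in[0,r).\tag{I}$$ Moreover, this $\tau$ is continuously differentiable and satisfies $$\tau'(t)=1-\frac{f(A(t))}{f(A(t-\tau(t)))}\quad\text{for all }t\in[0,r),\qquad \tau(0)=\tau_0.\tag{ODE}$$ Conversely, if $\tau:[0,r)\to[0,\infty)$ is a $C^1$ function satisfying (ODE), then it satisfies (I). *)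

theory Defs
  imports "HOL-Analysis.Analysis"
begin

end

theory Submission imports Defs begin

lemma prim_exists:
  fixes g :: "real \<Rightarrow> real" assumes gc: "continuous_on {..<r} g" and rp: "r > (0::real)"
  shows "\<exists>P. \<forall>x<r. (P has_real_derivative g x) (at x)"
proof -
  define P where "P x = integral {0..x} g - integral {x..0} g" for x
  have "(P has_real_derivative g x) (at x)" if xr: "x < r" for x
  proof -
    define a where "a = min x 0 - 1"
    define b where "b = (max x 0 + r) / 2"
    have ab: "a < x" "x < b" "a < 0" "0 < b" "b < r" using xr rp by (auto simp: a_def b_def)
    have gab: "continuous_on {a..b} g" by (rule continuous_on_subset[OF gc]) (use ab in auto)
    have gint: "g integrable_on {a..b}" by (rule integrable_continuous_real[OF gab])
    have eq: "integral {a..y} g - integral {a..0} g = P y" if y: "y \<in> {a<..<b}" for y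
    proof (cases "y \<ge> 0")
      case True
      have "integral {a..0} g + integral {0..y} g = integral {a..y} g"
      proof -
        have sub: "{a..y} \<subseteq> {a..b}" using y by auto
        have "g integrable_on {a..y}" by (rule integrable_subinterval_real[OF gint sub])
        moreover have "a \<le> 0" "0 \<le> y" using ab True by auto
        ultimately show ?thesis by (rule Henstock_Kurzweil_Integration.integral_combine[rotated 2])
      qed
      moreover have "integral {y..0} g = 0"
        using True by (cases "y = 0") auto
      ultimately show ?thesis by (simp add: P_def)
    next
      case False
      have "integral {a..y} g + integral {y..0} g = integral {a..0} g"
      proof -
        have sub: "{a..0} \<subseteq> {a..b}" using ab by auto
        have "g integrable_on {a..0}" by (rule integrable_subinterval_real[OF gint sub])
        moreover have "a \<le> y" "y \<le> 0" using y False by auto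
        ultimately show ?thesis by (rule Henstock_Kurzweil_Integration.integral_combine[rotated 2])
      qed
      moreover have "integral {0..y} g = 0"
        using False by simp
      ultimately show ?thesis by (simp add: P_def)
    qed
    have "((\<lambda>y. integral {a..y} g) has_real_derivative g x) (at x within {a..b})"
      using ab by (intro integral_has_real_derivative gab) auto
    then have "((\<lambda>y. integral {a..y} g - integral {a..0} g) has_real_derivative g x) (at x within {a..b})"
      by (auto intro!: derivative_eq_intros)
    then have "((\<lambda>y. integral {a..y} g - integral {a..0} g) has_real_derivative g x) (at x within {a<..<b})"
      by (rule has_field_derivative_subset) auto
    moreover have "at x within {a<..<b} = at x" using ab by (intro at_within_open) auto
    ultimately have "((\<lambda>y. integral {a..y} g - integral {a..0} g) has_real_derivative g x) (at x)"
      by simp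
    then show ?thesis
      by (rule has_field_derivative_transform_within_open[where S="{a<..<b}"]) (use ab eq in auto)
  qed
  then show ?thesis by blast
qed

lemma prim_ftc:
  fixes g P :: "real \<Rightarrow> real"
  assumes P: "\<And>x. x < r \<Longrightarrow> (P has_real_derivative g x) (at x)"
    and ab: "a \<le> b" "b < r"
  shows "integral {a..b} g = P b - P a"
proof -
  have "(g has_integral (P b - P a)) {a..b}"
  proof (rule fundamental_theorem_of_calculus[OF ab(1)])
    fix x assume x: "x \<in> {a..b}"
    have "x < r" using x ab(2) by (simp add: atLeastAtMost_iff)
    then have "(P has_real_derivative g x) (at x within {a..b})"
      by (rule has_field_derivative_at_within[OF P])
    then show "(P has_vector_derivative g x) (at x within {a..b})"
      by (rule has_real_derivative_iff_has_vector_derivative[THEN iffD1])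
  qed
  then show ?thesis by (rule integral_unique)
qed

lemma prim_mono:
  fixes g P :: "real \<Rightarrow> real"
  assumes P: "\<And>x. x < r \<Longrightarrow> (P has_real_derivative g x) (at x)"
    and gp: "\<And>x. g x > 0"
    and ab: "a < b" "b < r"
  shows "P a < P b"
  using ab(1)
proof (rule DERIV_pos_imp_increasing)
  fix x assume "a \<le> x" "x \<le> b"
  then have "x < r" using ab by simp
  then show "\<exists>y. (P has_real_derivative y) (at x) \<and> y > 0" using P[of x] gp[of x] by auto
qed


theorem lemma2p1:
  fixes f f' :: "real \<Rightarrow> real" and A \<phi> :: "real \<Rightarrow> real" and r \<tau>0 :: real
  assumes f_lip: "\<exists>L. lipschitz_on L UNIV f"
    and f_deriv: "\<And>x. (f has_real_derivative f' x) (at x)"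
    and f'_cont: "continuous_on UNIV f'"
    and f_pos: "\<And>x. f x > 0"
    and f'_nonpos: "\<And>x. f' x \<le> 0"
    and f_lim: "(f \<longlongrightarrow> 0) at_top"
    and r_pos: "r > 0"
    and tau0: "\<tau>0 \<ge> 0"
    and A_cont: "continuous_on {..<r} A"
    and phi_cont: "continuous_on {..0} \<phi>"
    and A_phi: "\<And>t. t \<le> 0 \<Longrightarrow> A t = \<phi> t"
  shows
   "(\<exists>\<tau> :: real \<Rightarrow> real.
       (\<forall>t\<in>{0..<r}. \<tau> t \<ge> 0 \<and>
          integral {t - \<tau> t..t} (\<lambda>\<sigma>. f (A \<sigma>)) = integral {-\<tau>0..0} (\<lambda>\<sigma>. f (\<phi> \<sigma>)))
     \<and> (\<forall>\<rho> :: real \<Rightarrow> real.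
          (\<forall>t\<in>{0..<r}. \<rho> t \<ge> 0 \<and>
             integral {t - \<rho> t..t} (\<lambda>\<sigma>. f (A \<sigma>)) = integral {-\<tau>0..0} (\<lambda>\<sigma>. f (\<phi> \<sigma>)))
          \<longrightarrow> (\<forall>t\<in>{0..<r}. \<rho> t = \<tau> t))
     \<and> (\<exists>\<tau>' :: real \<Rightarrow> real.
          (\<forall>t\<in>{0..<r}. (\<tau> has_real_derivative \<tau>' t) (at t within {0..<r}))
          \<and> continuous_on {0..<r} \<tau>'
          \<and> (\<forall>t\<in>{0..<r}. \<tau>' t = 1 - f (A t) / f (A (t - \<tau> t))))
     \<and> \<tau> 0 = \<tau>0)
   \<and>
   (\<forall>\<tau> \<tau>' :: real \<Rightarrow> real.
       (\<forall>t\<in>{0..<r}. \<tau> t \<ge> 0)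
     \<and> (\<forall>t\<in>{0..<r}. (\<tau> has_real_derivative \<tau>' t) (at t within {0..<r}))
     \<and> continuous_on {0..<r} \<tau>'
     \<and> (\<forall>t\<in>{0..<r}. \<tau>' t = 1 - f (A t) / f (A (t - \<tau> t)))
     \<and> \<tau> 0 = \<tau>0
     \<longrightarrow> (\<forall>t\<in>{0..<r}.
            integral {t - \<tau> t..t} (\<lambda>\<sigma>. f (A \<sigma>)) = integral {-\<tau>0..0} (\<lambda>\<sigma>. f (\<phi> \<sigma>))))"
proof -
  have fc: "continuous_on UNIV f"
  proof (rule continuous_at_imp_continuous_on, rule ballI)
    fix x show "isCont f x" by (rule DERIV_isCont[OF f_deriv])
  qed
  define g where "g = (\<lambda>\<sigma>. f (A \<sigma>))"
  have gc: "continuous_on {..<r} g"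
    unfolding g_def by (rule continuous_on_compose2[OF fc A_cont]) auto
  have gp: "\<And>x. g x > 0" using f_pos by (simp add: g_def)
  obtain P where P: "\<And>x. x < r \<Longrightarrow> (P has_real_derivative g x) (at x)"
    using prim_exists[OF gc r_pos] by blast
  have Pftc: "\<And>a b. a \<le> b \<Longrightarrow> b < r \<Longrightarrow> integral {a..b} g = P b - P a"
    using prim_ftc[OF P] by blast
  have Pmono: "\<And>a b. a < b \<Longrightarrow> b < r \<Longrightarrow> P a < P b"
    using prim_mono[OF P gp] by blast
  have Pinj: "a = b" if "a < r" "b < r" "P a = P b" for a b
    using Pmono[of a b] Pmono[of b a] that by (cases a b rule: linorder_cases) auto
  have injP: "inj_on P {..<r}" by (auto intro: inj_onI Pinj)
  have Pcont: "\<And>x. x < r \<Longrightarrow> isCont P x" by (rule DERIV_isCont[OF P])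
  have Pcon: "continuous_on {..<r} P" using Pcont by (intro continuous_at_imp_continuous_on) auto
  define C where "C = integral {-\<tau>0..0} (\<lambda>\<sigma>. f (\<phi> \<sigma>))"
  have "C = integral {-\<tau>0..0} g"
    unfolding C_def g_def by (rule integral_cong) (auto simp: A_phi)
  also have "\<dots> = P 0 - P (-\<tau>0)" using tau0 r_pos by (intro Pftc) auto
  finally have C_eq: "C = P 0 - P (-\<tau>0)" .
  define Q where "Q = inv_into {..<r} P"
  have QP: "\<And>x. x < r \<Longrightarrow> Q (P x) = x" unfolding Q_def using injP by (auto intro: inv_into_f_f)
  define s where "s t = Q (P t - C)" for t
  have sprop: "s t \<le> t \<and> P (s t) = P t - C" if t: "t \<in> {0..<r}" for t
  proof -
    have "P (-\<tau>0) \<le> P 0" using Pmono[of "-\<tau>0" 0] tau0 r_pos by (cases "\<tau>0 = 0") auto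
    have "P 0 \<le> P t" using Pmono[of 0 t] t by (cases "t = 0") auto
    have ic: "\<forall>x. -\<tau>0 \<le> x \<and> x \<le> t \<longrightarrow> isCont P x"
    proof (intro allI impI)
      fix x assume "-\<tau>0 \<le> x \<and> x \<le> t"
      then have "x < r" using t by auto
      then show "isCont P x" by (rule Pcont)
    qed
    have l1: "P (-\<tau>0) \<le> P t - C" using \<open>P 0 \<le> P t\<close> by (simp add: C_eq)
    have l2: "P t - C \<le> P t" using \<open>P (-\<tau>0) \<le> P 0\<close> by (simp add: C_eq)
    have l3: "-\<tau>0 \<le> t" using t tau0 by auto
    have "\<exists>x. -\<tau>0 \<le> x \<and> x \<le> t \<and> P x = P t - C"
      by (rule IVT[OF l1 l2 l3 ic])
    then obtain x where x: "-\<tau>0 \<le> x" "x \<le> t" "P x = P t - C" by blast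
    then have "s t = x" using t QP[of x] by (simp add: s_def)
    then show ?thesis using x by simp
  qed
  define \<tau> where "\<tau> t = t - s t" for t
  have tau_int: "\<tau> t \<ge> 0 \<and> integral {t - \<tau> t..t} g = C" if t: "t \<in> {0..<r}" for t
  proof -
    have st: "s t \<le> t" "P (s t) = P t - C" using sprop[OF t] by auto
    have tr: "t < r" using t by (simp add: atLeastLessThan_iff)
    have e: "t - \<tau> t = s t" by (simp add: \<tau>_def)
    have "integral {s t..t} g = P t - P (s t)" by (rule Pftc[OF st(1) tr])
    then have "integral {t - \<tau> t..t} g = C" using e st(2) by simp
    moreover have "\<tau> t \<ge> 0" using st(1) by (simp add: \<tau>_def)
    ultimately show ?thesis by simp
  qed
  have uniq: "\<rho> t = \<tau> t" if t: "t \<in> {0..<r}" and h: "\<rho> t \<ge> 0" "integral {t - \<rho> t..t} g = C" for \<rho> t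
  proof -
    have st: "s t \<le> t" "P (s t) = P t - C" using sprop[OF t] by auto
    have tr: "t < r" using t by (simp add: atLeastLessThan_iff)
    have le: "t - \<rho> t \<le> t" using h(1) by simp
    have "integral {t - \<rho> t..t} g = P t - P (t - \<rho> t)" by (rule Pftc[OF le tr])
    then have "P (t - \<rho> t) = P (s t)" using h(2) st(2) by simp
    moreover have "t - \<rho> t < r" using le tr by linarith
    moreover have "s t < r" using st(1) tr by linarith
    ultimately have "t - \<rho> t = s t" using Pinj by blast
    then show ?thesis by (simp add: \<tau>_def)
  qed
  have sder: "(s has_real_derivative g t / g (s t)) (at t)" if t: "t \<in> {0..<r}" for t
  proof -
    have str: "s t < r" using sprop[OF t] t by auto
    have "(Q has_derivative (\<lambda>h. inverse (g (s t)) * h)) (at (P (s t)))"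
    proof (rule has_derivative_inverse_strong[where S="{..<r}" and f=P and f'="\<lambda>h. g (s t) * h"])
      show "(P has_derivative (\<lambda>h. g (s t) * h)) (at (s t))"
        using P[OF str] by (simp add: has_field_derivative_def)
      show "(\<lambda>h. g (s t) * h) \<circ> (\<lambda>h. inverse (g (s t)) * h) = id"
        using gp[of "s t"] by (auto simp: fun_eq_iff)
    qed (use str QP Pcon in auto)
    then have "(Q has_real_derivative inverse (g (s t))) (at (P t - C))"
      using sprop[OF t] by (simp add: has_field_derivative_def mult_commute_abs)
    moreover have "((\<lambda>t. P t - C) has_real_derivative g t) (at t)"
      using DERIV_diff[OF P[of t] DERIV_const[of C]] t by simp
    ultimately have "((\<lambda>t. Q (P t - C)) has_real_derivative inverse (g (s t)) * g t) (at t)"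
      by (rule DERIV_chain2)
    then show ?thesis by (simp add: s_def[abs_def] field_simps)
  qed
  have scont: "continuous_on {0..<r} s"
  proof (rule continuous_at_imp_continuous_on, rule ballI)
    fix x assume "x \<in> {0..<r}" then show "isCont s x" by (rule DERIV_isCont[OF sder])
  qed
  have gs_cont: "continuous_on {0..<r} (\<lambda>t. g (s t))"
  proof (rule continuous_on_compose2[OF gc scont], rule subsetI)
    fix y assume "y \<in> s ` {0..<r}"
    then obtain t where t: "t \<in> {0..<r}" "y = s t" by (rule imageE)
    have st: "s t \<le> t" using sprop[OF t(1)] by (rule conjunct1)
    have tr: "t < r" using t(1) by (simp add: atLeastLessThan_iff)
    have "y < r" using st tr t(2) by linarith
    then show "y \<in> {..<r}" by (simp add: lessThan_iff)
  qed
  have gcont0: "continuous_on {0..<r} g" by (rule continuous_on_subset[OF gc]) (rule subsetI, simp add: atLeastLessThan_iff lessThan_iff)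
  have tau00: "\<tau> 0 = \<tau>0"
  proof -
    have z: "(0::real) \<in> {0..<r}" using r_pos by (simp add: atLeastLessThan_iff)
    have st: "s 0 \<le> 0" "P (s 0) = P 0 - C" using sprop[OF z] by auto
    have "P (s 0) = P (-\<tau>0)" using st(2) by (simp add: C_eq)
    moreover have "s 0 < r" using st(1) r_pos by linarith
    moreover have "-\<tau>0 < r" using tau0 r_pos by linarith
    ultimately have "s 0 = -\<tau>0" using Pinj by blast
    then show ?thesis by (simp add: \<tau>_def)
  qed
  have part1: "(\<exists>\<tau> :: real \<Rightarrow> real.
       (\<forall>t\<in>{0..<r}. \<tau> t \<ge> 0 \<and> integral {t - \<tau> t..t} g = C)
     \<and> (\<forall>\<rho> :: real \<Rightarrow> real.
          (\<forall>t\<in>{0..<r}. \<rho> t \<ge> 0 \<and> integral {t - \<rho> t..t} g = C)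
          \<longrightarrow> (\<forall>t\<in>{0..<r}. \<rho> t = \<tau> t))
     \<and> (\<exists>\<tau>' :: real \<Rightarrow> real.
          (\<forall>t\<in>{0..<r}. (\<tau> has_real_derivative \<tau>' t) (at t within {0..<r}))
          \<and> continuous_on {0..<r} \<tau>'
          \<and> (\<forall>t\<in>{0..<r}. \<tau>' t = 1 - g t / g (t - \<tau> t)))
     \<and> \<tau> 0 = \<tau>0)"
  proof (rule exI[of _ \<tau>], intro conjI)
    show "\<exists>\<tau>'. (\<forall>t\<in>{0..<r}. (\<tau> has_real_derivative \<tau>' t) (at t within {0..<r}))
          \<and> continuous_on {0..<r} \<tau>' \<and> (\<forall>t\<in>{0..<r}. \<tau>' t = 1 - g t / g (t - \<tau> t))"
    proof (rule exI[of _ "\<lambda>t. 1 - g t / g (s t)"], intro conjI ballI)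
      fix t assume t: "t \<in> {0..<r}"
      have "(\<tau> has_real_derivative 1 - g t / g (s t)) (at t)"
        unfolding \<tau>_def[abs_def] by (rule DERIV_diff[OF DERIV_ident sder[OF t]])
      then show "(\<tau> has_real_derivative 1 - g t / g (s t)) (at t within {0..<r})"
        by (rule has_field_derivative_at_within)
    next
      fix t assume t: "t \<in> {0..<r}"
      show "1 - g t / g (s t) = 1 - g t / g (t - \<tau> t)" by (simp add: \<tau>_def)
    next
      show "continuous_on {0..<r} (\<lambda>t. 1 - g t / g (s t))"
      proof (intro continuous_on_diff continuous_on_const continuous_on_divide gcont0 gs_cont ballI)
        fix t show "g (s t) \<noteq> 0" using gp[of "s t"] by simp
      qed
    qed
  next
    show "\<forall>t\<in>{0..<r}. 0 \<le> \<tau> t \<and> integral {t - \<tau> t..t} g = C"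
      using tau_int by blast
  next
    show "\<forall>\<rho>. (\<forall>t\<in>{0..<r}. 0 \<le> \<rho> t \<and> integral {t - \<rho> t..t} g = C) \<longrightarrow> (\<forall>t\<in>{0..<r}. \<rho> t = \<tau> t)"
    proof (intro allI impI ballI)
      fix \<rho> t assume h: "\<forall>t\<in>{0..<r}. 0 \<le> \<rho> t \<and> integral {t - \<rho> t..t} g = C" and t: "t \<in> {0..<r}"
      have "0 \<le> \<rho> t \<and> integral {t - \<rho> t..t} g = C" using h t by (rule bspec)
      then show "\<rho> t = \<tau> t" using uniq[OF t] by blast
    qed
  next
    show "\<tau> 0 = \<tau>0" by (rule tau00)
  qed
  have part2: "\<forall>\<tau> \<tau>' :: real \<Rightarrow> real.
       (\<forall>t\<in>{0..<r}. \<tau> t \<ge> 0)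
     \<and> (\<forall>t\<in>{0..<r}. (\<tau> has_real_derivative \<tau>' t) (at t within {0..<r}))
     \<and> continuous_on {0..<r} \<tau>'
     \<and> (\<forall>t\<in>{0..<r}. \<tau>' t = 1 - g t / g (t - \<tau> t))
     \<and> \<tau> 0 = \<tau>0
     \<longrightarrow> (\<forall>t\<in>{0..<r}. integral {t - \<tau> t..t} g = C)"
  proof (intro allI impI ballI, elim conjE)
    fix \<tau> \<tau>' :: "real \<Rightarrow> real" and t :: real
    assume t: "t \<in> {0..<r}"
      and H1: "\<forall>t\<in>{0..<r}. \<tau> t \<ge> 0"
      and H2: "\<forall>t\<in>{0..<r}. (\<tau> has_real_derivative \<tau>' t) (at t within {0..<r})"
      and H3: "continuous_on {0..<r} \<tau>'"
      and H4: "\<forall>t\<in>{0..<r}. \<tau>' t = 1 - g t / g (t - \<tau> t)"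
      and H5: "\<tau> 0 = \<tau>0"
    have D: "((\<lambda>t. P t - P (t - \<tau> t)) has_real_derivative 0) (at u within {0..<r})"
      if u: "u \<in> {0..<r}" for u
    proof -
      have ur: "u < r" using u by (simp add: atLeastLessThan_iff)
      have tu: "\<tau> u \<ge> 0" using H1 u by (rule bspec)
      have vr: "u - \<tau> u < r" using ur tu by linarith
      have d0: "(\<tau> has_real_derivative \<tau>' u) (at u within {0..<r})" using H2 u by (rule bspec)
      have d1: "((\<lambda>t. t - \<tau> t) has_real_derivative 1 - \<tau>' u) (at u within {0..<r})"
        by (rule DERIV_diff[OF DERIV_ident d0])
      have d2: "((\<lambda>t. P (t - \<tau> t)) has_real_derivative g (u - \<tau> u) * (1 - \<tau>' u)) (at u within {0..<r})"
        by (rule DERIV_chain2[OF P[OF vr] d1])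
      have d3: "(P has_real_derivative g u) (at u within {0..<r})"
        by (rule has_field_derivative_at_within[OF P[OF ur]])
      have e4: "\<tau>' u = 1 - g u / g (u - \<tau> u)" using H4 u by (rule bspec)
      have gv: "g (u - \<tau> u) \<noteq> 0" using gp[of "u - \<tau> u"] by simp
      have zero: "g u - g (u - \<tau> u) * (1 - \<tau>' u) = 0"
        unfolding e4 using gv by (simp add: field_simps)
      have "((\<lambda>t. P t - P (t - \<tau> t)) has_real_derivative g u - g (u - \<tau> u) * (1 - \<tau>' u)) (at u within {0..<r})"
        by (rule DERIV_diff[OF d3 d2])
      then show ?thesis unfolding zero .
    qed
    have cvx: "convex {0..<r::real}" by (rule convex_real_interval)
    obtain c where c: "\<forall>x\<in>{0..<r}. P x - P (x - \<tau> x) = c"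
      using has_field_derivative_zero_constant[OF cvx D] by blast
    have tr: "t < r" using t by (simp add: atLeastLessThan_iff)
    have tt: "\<tau> t \<ge> 0" using H1 t by (rule bspec)
    have le: "t - \<tau> t \<le> t" using tt by linarith
    have z: "(0::real) \<in> {0..<r}" using r_pos by (simp add: atLeastLessThan_iff)
    have c1: "P t - P (t - \<tau> t) = c" using c t by (rule bspec)
    have c0: "P 0 - P (0 - \<tau> 0) = c" using c z by (rule bspec)
    have "integral {t - \<tau> t..t} g = P t - P (t - \<tau> t)" by (rule Pftc[OF le tr])
    also have "\<dots> = P 0 - P (0 - \<tau> 0)" using c1 c0 by simp
    also have "\<dots> = C" using H5 C_eq by simp
    finally show "integral {t - \<tau> t..t} g = C" .
  qed
  show ?thesis by (intro conjI part1[unfolded g_def C_def] part2[unfolded g_def C_def])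
qed

end
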